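(* Let $K_1\subset U(N_1)$ and $K_2\subset U(N_2)$ be compact connected subgroups and let $K=K_1\oplus K_2=\{U_1\oplus U_2\mid U_1\in K_1,U_2\in K_2\}\subset U(N_1+N_2)$, where $U_1\oplus U_2=\begin{bmatrix}U_1&0\\0&U_2\end{bmatrix}$. Let $A=A_1\oplus A_2$ and $C=C_1\oplus C_2$ with $A_i,C_i\in\mathbb{C}^{N_i\times N_i}$, $i=1,2$. Then $$W_K(C,A)=W_{K_1}(C_1,A_1)+W_{K_2}(C_2,A_2)$$ (Minkowski sum). In particular, $W_K(C,A)$ is star-shaped (resp. convex) if $W_{K_1}(C_1,A_1)$ and $W_{K_2}(C_2,A_2)$ are star-shaped (resp. convex).
   Context: For a compact connected subgroup $K\subset U(N)$ and $C,A\in\mathbb{C}^{N\times N}$, the relative $C$-numerical range is $W_K(C,A)=\{\mathrm{tr}(C^\dagger UAU^\dagger)\mid U\in K\}\subset\mathbb{C}$. *)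

theory Defs
  imports "HOL-Analysis.Analysis"
begin

text \<open>Square complex matrices of size N are represented as complex^'n^'n with CARD('n) = N.\<close>

definition mtrace :: "complex^'n^'n \<Rightarrow> complex" where
  "mtrace A = (\<Sum>i\<in>UNIV. A $ i $ i)"

definition adj :: "complex^'n^'n \<Rightarrow> complex^'n^'n" where
  "adj A = (\<chi> i j. cnj (A $ j $ i))"

definition unitary_group :: "(complex^'n^'n) set" where
  "unitary_group = {U. adj U ** U = mat 1 \<and> U ** adj U = mat 1}"

definition compact_connected_subgroup :: "(complex^'n^'n) set \<Rightarrow> bool" where
  "compact_connected_subgroup K \<longleftrightarrow>
     K \<subseteq> unitary_group \<and> mat 1 \<in> K \<and>
     (\<forall>U\<in>K. \<forall>V\<in>K. U ** V \<in> K) \<and> (\<forall>U\<in>K. adj U \<in> K) \<and>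
     compact K \<and> connected K"

definition rel_numrange :: "(complex^'n^'n) set \<Rightarrow> complex^'n^'n \<Rightarrow> complex^'n^'n \<Rightarrow> complex set" where
  "rel_numrange K C A = {mtrace (adj C ** (U ** A ** adj U)) | U. U \<in> K}"

text \<open>Block-diagonal direct sum; the index type 'n + 'm has N1 + N2 elements.\<close>
definition dsum :: "complex^'n^'n \<Rightarrow> complex^'m^'m \<Rightarrow> complex^('n + 'm)^('n + 'm)" where
  "dsum A B = (\<chi> i j. case (i, j) of
      (Inl a, Inl b) \<Rightarrow> A $ a $ b
    | (Inr a, Inr b) \<Rightarrow> B $ a $ b
    | _ \<Rightarrow> 0)"

definition minkowski_sum :: "complex set \<Rightarrow> complex set \<Rightarrow> complex set" where
  "minkowski_sum S T = {s + t | s t. s \<in> S \<and> t \<in> T}"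

end

theory Submission
  imports Defs
begin

lemma sum_UNIV_plus:
  fixes f :: "('a::finite + 'b::finite) \<Rightarrow> 'c::comm_monoid_add"
  shows "(\<Sum>x\<in>UNIV. f x) = (\<Sum>a\<in>UNIV. f (Inl a)) + (\<Sum>b\<in>UNIV. f (Inr b))"
proof -
  have "(\<Sum>x\<in>UNIV. f x) = (\<Sum>x\<in>Inl ` UNIV \<union> Inr ` UNIV. f x)"
    by (simp only: UNIV_sum[symmetric])
  also have "\<dots> = (\<Sum>x\<in>Inl ` UNIV. f x) + (\<Sum>x\<in>Inr ` UNIV. f x)"
    by (rule sum.union_disjoint) auto
  also have "\<dots> = (\<Sum>a\<in>UNIV. f (Inl a)) + (\<Sum>b\<in>UNIV. f (Inr b))"
    by (simp add: sum.reindex)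
  finally show ?thesis .
qed

lemma dsum_mult: "dsum A B ** dsum C D = dsum (A ** C) (B ** D)"
  unfolding dsum_def matrix_matrix_mult_def
  by (rule vec_eq_iff[THEN iffD2], auto simp: vec_eq_iff sum_UNIV_plus split: sum.splits)

lemma dsum_adj: "adj (dsum A B) = dsum (adj A) (adj B)"
  unfolding dsum_def adj_def
  by (auto simp: vec_eq_iff split: sum.splits)

lemma dsum_trace: "mtrace (dsum A B) = mtrace A + mtrace B"
  unfolding dsum_def mtrace_def by (simp add: sum_UNIV_plus)

lemma starlike_sum:
  fixes S T :: "complex set"
  assumes "starlike S" "starlike T"
  shows "starlike (minkowski_sum S T)"
proof -
  obtain a where a: "a \<in> S" "\<forall>x\<in>S. closed_segment a x \<subseteq> S" using assms(1) unfolding starlike_def by blast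
  obtain b where b: "b \<in> T" "\<forall>x\<in>T. closed_segment b x \<subseteq> T" using assms(2) unfolding starlike_def by blast
  have "\<forall>z\<in>minkowski_sum S T. closed_segment (a+b) z \<subseteq> minkowski_sum S T"
  proof
    fix z assume "z \<in> minkowski_sum S T"
    then obtain x y where z: "z = x + y" "x \<in> S" "y \<in> T" unfolding minkowski_sum_def by blast
    show "closed_segment (a+b) z \<subseteq> minkowski_sum S T"
    proof
      fix w assume "w \<in> closed_segment (a+b) z"
      then obtain u where u: "0 \<le> u" "u \<le> 1" "w = (1-u) *\<^sub>R (a+b) + u *\<^sub>R z"
        unfolding closed_segment_def by blast
      have "(1-u) *\<^sub>R a + u *\<^sub>R x \<in> S" using a z u unfolding closed_segment_def by blast
      moreover have "(1-u) *\<^sub>R b + u *\<^sub>R y \<in> T" using b z u unfolding closed_segment_def by blast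
      moreover have "w = ((1-u) *\<^sub>R a + u *\<^sub>R x) + ((1-u) *\<^sub>R b + u *\<^sub>R y)"
        using u z by (simp add: algebra_simps)
      ultimately show "w \<in> minkowski_sum S T" unfolding minkowski_sum_def by blast
    qed
  qed
  moreover have "a + b \<in> minkowski_sum S T" using a b unfolding minkowski_sum_def by blast
  ultimately show ?thesis unfolding starlike_def by blast
qed

theorem proposition2p8:
  fixes K1 :: "(complex^'n1^'n1) set" and K2 :: "(complex^'n2^'n2) set"
    and A1 C1 :: "complex^'n1^'n1" and A2 C2 :: "complex^'n2^'n2"
  assumes "compact_connected_subgroup K1" and "compact_connected_subgroup K2"
  defines "K \<equiv> {dsum U1 U2 | U1 U2. U1 \<in> K1 \<and> U2 \<in> K2}"
  shows "rel_numrange K (dsum C1 C2) (dsum A1 A2)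
           = minkowski_sum (rel_numrange K1 C1 A1) (rel_numrange K2 C2 A2)
         \<and> (starlike (rel_numrange K1 C1 A1) \<and> starlike (rel_numrange K2 C2 A2)
           \<longrightarrow> starlike (rel_numrange K (dsum C1 C2) (dsum A1 A2)))
         \<and> (convex (rel_numrange K1 C1 A1) \<and> convex (rel_numrange K2 C2 A2)
           \<longrightarrow> convex (rel_numrange K (dsum C1 C2) (dsum A1 A2)))"
proof -
  have eq: "rel_numrange K (dsum C1 C2) (dsum A1 A2)
           = minkowski_sum (rel_numrange K1 C1 A1) (rel_numrange K2 C2 A2)"
    unfolding rel_numrange_def minkowski_sum_def K_def
  proof (intro set_eqI iffI)
    fix z assume "z \<in> {mtrace (adj (dsum C1 C2) ** (U ** dsum A1 A2 ** adj U)) |U.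
              U \<in> {dsum U1 U2 |U1 U2. U1 \<in> K1 \<and> U2 \<in> K2}}"
    then show "z \<in> {s + t |s t. s \<in> {mtrace (adj C1 ** (U ** A1 ** adj U)) |U. U \<in> K1} \<and>
             t \<in> {mtrace (adj C2 ** (U ** A2 ** adj U)) |U. U \<in> K2}}"
      by (auto simp: dsum_mult dsum_adj dsum_trace) blast
  next
    fix z assume "z \<in> {s + t |s t. s \<in> {mtrace (adj C1 ** (U ** A1 ** adj U)) |U. U \<in> K1} \<and>
             t \<in> {mtrace (adj C2 ** (U ** A2 ** adj U)) |U. U \<in> K2}}"
    then obtain U1 U2 where u: "U1 \<in> K1" "U2 \<in> K2"
      "z = mtrace (adj C1 ** (U1 ** A1 ** adj U1)) + mtrace (adj C2 ** (U2 ** A2 ** adj U2))" by blast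
    then have "z = mtrace (adj (dsum C1 C2) ** (dsum U1 U2 ** dsum A1 A2 ** adj (dsum U1 U2)))"
      by (simp add: dsum_mult dsum_adj dsum_trace)
    then show "z \<in> {mtrace (adj (dsum C1 C2) ** (U ** dsum A1 A2 ** adj U)) |U.
              U \<in> {dsum U1 U2 |U1 U2. U1 \<in> K1 \<and> U2 \<in> K2}}"
      using u by blast
  qed
  have "convex (minkowski_sum S T)" if "convex S" "convex T" for S T :: "complex set"
  proof -
    have "{s + t |s t. s \<in> S \<and> t \<in> T} = (\<Union>x\<in>S. \<Union>y\<in>T. {x + y})" by blast
    then show ?thesis unfolding minkowski_sum_def using convex_sums[OF that] by simp
  qed
  then show ?thesis using eq starlike_sum by simp
qed

end
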